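(* Let $n\ge2$. For $j=0,\dots,\lfloor n/2\rfloor$, $$\pi(p_j)=\begin{cases}p_0&\text{if }j=0,\\ p_j-p_{j-1}&\text{if }0<j<\lfloor n/2\rfloor,\\ -p_{\lfloor n/2\rfloor-1}&\text{if }j=\lfloor n/2\rfloor,\end{cases}$$ (where on the right $p_i$ denotes the corresponding element for $\mathfrak{S}_{n-2}$). Therefore $\pi$ maps $\wp_n$ onto $\wp_{n-2}$ with a $1$-dimensional kernel spanned by $\sum_{j=0}^{\lfloor n/2\rfloor}p_j=\sum_{u\in\mathfrak{S}_n}u$.
   Context: For $u\in\mathfrak{S}_m$, $\mathrm{Peak}(u)=\{i\in[m-1]:u_{i-1}<u_i>u_{i+1}\}$ with $u_0=0$; $\mathcal{F}_m$: subsets of $[m-1]$ without two consecutive integers; $P_F=\sum_{\mathrm{Peak}(u)=F}u$; $\mathcal{P}_m=\mathrm{span}\{P_F\}$, $\mathcal{P}_0=\mathcal{P}_1=\mathbb{Q}$. $p_j=\sum_{u\in\mathfrak{S}_m,\#\mathrm{Peak}(u)=j}u$ ($0\le j\le\lfloor m/2\rfloor$) and $\wp_m=\mathrm{span}\{p_j\}$. $\pi:\mathcal{P}_n\to\mathcal{P}_{n-2}$ is linear: $P_F\mapsto P_{F-2}$ if $1,2\notin F$; $P_F\mapsto-P_{(F\setminus\{1\})-2}$ if $1\in F$; $P_F\mapsto0$ if $2\in F$ (here $F-2=\{f-2:f\in F\}$). *)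

theory Defs
  imports Complex_Main "HOL-Library.Function_Algebras"
begin

text \<open>Elements of the group algebra Q[S_m] are functions from permutations
(in one-line notation, lists u = [u_1,...,u_m]) to rationals, supported on S_m.\<close>

type_synonym elem = "nat list \<Rightarrow> rat"

definition perms :: "nat \<Rightarrow> nat list set" where
  "perms m = {u. distinct u \<and> set u = {1..m}}"

text \<open>u_i with the convention u_0 = 0 (positions are 1-based).\<close>
definition pval :: "nat list \<Rightarrow> nat \<Rightarrow> nat" where
  "pval u i = (if i = 0 then 0 else u ! (i - 1))"

definition Peak :: "nat list \<Rightarrow> nat set" where
  "Peak u = {i. 1 \<le> i \<and> i \<le> length u - 1 \<and>
              pval u (i - 1) < pval u i \<and> pval u i > pval u (i + 1)}"

definition Fam :: "nat \<Rightarrow> nat set set" where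
  "Fam m = {F. F \<subseteq> {1..m - 1} \<and> (\<forall>i\<in>F. i + 1 \<notin> F)}"

definition smul :: "rat \<Rightarrow> elem \<Rightarrow> elem" where
  "smul c x = (\<lambda>u. c * x u)"

definition PF :: "nat \<Rightarrow> nat set \<Rightarrow> elem" where
  "PF m F = (\<lambda>u. if u \<in> perms m \<and> Peak u = F then 1 else 0)"

definition Pspace :: "nat \<Rightarrow> elem set" where
  "Pspace m = {(\<Sum>F\<in>Fam m. smul (c F) (PF m F)) | c. True}"

definition pj :: "nat \<Rightarrow> nat \<Rightarrow> elem" where
  "pj m j = (\<lambda>u. if u \<in> perms m \<and> card (Peak u) = j then 1 else 0)"

definition wp :: "nat \<Rightarrow> elem set" where
  "wp m = {(\<Sum>j\<le>m div 2. smul (c j) (pj m j)) | c. True}"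

definition allperms :: "nat \<Rightarrow> elem" where
  "allperms m = (\<lambda>u. if u \<in> perms m then 1 else 0)"

definition pi_img :: "nat \<Rightarrow> nat set \<Rightarrow> elem" where
  "pi_img n F =
    (if 2 \<in> F then 0
     else if 1 \<in> F then - PF (n - 2) ((\<lambda>f. f - 2) ` (F - {1}))
     else PF (n - 2) ((\<lambda>f. f - 2) ` F))"

definition is_pi :: "nat \<Rightarrow> (elem \<Rightarrow> elem) \<Rightarrow> bool" where
  "is_pi n \<pi> \<longleftrightarrow> (\<forall>c. \<pi> (\<Sum>F\<in>Fam n. smul (c F) (PF n F)) =
                          (\<Sum>F\<in>Fam n. smul (c F) (pi_img n F)))"

end

theory Submission
  imports Defs
begin

lemma sum_fun_apply: "(\<Sum>x\<in>A. f x) (u::'b) = (\<Sum>x\<in>A. (f x u :: 'c::comm_monoid_add))"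
  by (induction A rule: infinite_finite_induct) auto

lemma perms_length: "u \<in> perms m \<Longrightarrow> length u = m"
  unfolding perms_def using distinct_card by fastforce

lemma Peak_Fam: assumes "u \<in> perms m" shows "Peak u \<in> Fam m"
proof -
  have "length u = m" using assms perms_length by auto
  then show ?thesis unfolding Fam_def Peak_def by auto
qed

lemma Fam_finite: "finite (Fam m)"
proof -
  have "Fam m \<subseteq> Pow {1..m-1}" unfolding Fam_def by auto
  then show ?thesis by (rule finite_subset) auto
qed

lemma Fam_card: assumes "F \<in> Fam m" shows "finite F" "card F \<le> m div 2"
proof -
  have sub: "F \<subseteq> {1..m-1}" and nc: "\<forall>i\<in>F. i+1 \<notin> F" using assms unfolding Fam_def by auto
  show fin: "finite F" using sub finite_subset by blast
  have "F \<union> Suc ` F \<subseteq> {1..m}" using sub by force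
  hence "card (F \<union> Suc ` F) \<le> m" using card_mono[of "{1..m}"] by fastforce
  moreover have "F \<inter> Suc ` F = {}" using nc by auto
  moreover have "card (Suc ` F) = card F" by (simp add: card_image)
  ultimately have "2 * card F \<le> m" using fin card_Un_disjoint[of F "Suc ` F"] by simp
  thus "card F \<le> m div 2" by linarith
qed

lemma Peak_card: "u \<in> perms m \<Longrightarrow> card (Peak u) \<le> m div 2"
  using Peak_Fam Fam_card by blast

definition E :: "nat \<Rightarrow> (nat \<Rightarrow> rat) \<Rightarrow> elem" where
  "E m c = (\<lambda>u. if u \<in> perms m then c (card (Peak u)) else 0)"

lemma PF_sum: "(\<Sum>F\<in>Fam m. smul (d F) (PF m F)) = (\<lambda>u. if u \<in> perms m then d (Peak u) else 0)"
proof
  fix u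
  show "(\<Sum>F\<in>Fam m. smul (d F) (PF m F)) u = (if u \<in> perms m then d (Peak u) else 0)"
  proof (cases "u \<in> perms m")
    case True
    have "(\<Sum>F\<in>Fam m. smul (d F) (PF m F)) u = (\<Sum>F\<in>Fam m. if Peak u = F then d F else 0)"
      unfolding sum_fun_apply smul_def PF_def using True by (intro sum.cong) auto
    also have "\<dots> = d (Peak u)" using Peak_Fam[OF True] Fam_finite by (simp add: sum.delta)
    finally show ?thesis using True by simp
  next
    case False
    then show ?thesis unfolding sum_fun_apply smul_def PF_def by simp
  qed
qed

lemma pj_sum: assumes "m div 2 \<le> K" shows "(\<Sum>j\<le>K. smul (c j) (pj m j)) = E m c"
proof
  fix u
  show "(\<Sum>j\<le>K. smul (c j) (pj m j)) u = E m c u"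
  proof (cases "u \<in> perms m")
    case True
    have "(\<Sum>j\<le>K. smul (c j) (pj m j)) u = (\<Sum>j\<le>K. if card (Peak u) = j then c j else 0)"
      unfolding sum_fun_apply smul_def pj_def using True by (intro sum.cong) auto
    also have "\<dots> = c (card (Peak u))" using Peak_card[OF True] assms by (simp add: sum.delta)
    finally show ?thesis using True by (simp add: E_def)
  next
    case False
    then show ?thesis unfolding sum_fun_apply smul_def pj_def E_def by simp
  qed
qed

lemma pj_E: "pj m j = E m (\<lambda>i. if i = j then 1 else 0)"
  unfolding pj_def E_def by auto

lemma allperms_E: "allperms m = E m (\<lambda>i. 1)"
  unfolding allperms_def E_def by auto

lemma wp_E: "wp m = range (E m)"
  unfolding wp_def using pj_sum[of m "m div 2"] by auto

definition shift2 :: "nat list \<Rightarrow> nat list" where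
  "shift2 u = 2 # 1 # map (\<lambda>x. x + 2) u"

lemma pval_shift2:
  assumes "i < length u + 3"
  shows "pval (shift2 u) i = (if i = 0 then 0 else if i = 1 then 2 else if i = 2 then 1 else u ! (i - 3) + 2)"
proof -
  consider "i = 0" | "i = 1" | "i = 2" | k where "i = k + 3" proof -
    have "i = 0 \<or> i = 1 \<or> i = 2 \<or> i = (i - 3) + 3" by arith
    then show ?thesis using that by blast
  qed
  then show ?thesis
    by cases (use assms in \<open>auto simp: pval_def shift2_def nth_Cons'\<close>)
qed

lemma Peak_shift2:
  assumes "u \<in> perms m"
  shows "Peak (shift2 u) = insert 1 ((\<lambda>k. k + 2) ` Peak u)"
proof -
  have len: "length u = m" using assms perms_length by auto
  have pos: "u ! j \<ge> 1" if "j < m" for j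
  proof -
    have "u ! j \<in> set u" using len that by simp
    then show ?thesis using assms by (simp add: perms_def)
  qed
  have lv: "length (shift2 u) = m + 2" using len by (simp add: shift2_def)
  have v0: "pval (shift2 u) 0 = 0" and v1: "pval (shift2 u) 1 = 2" and v2: "pval (shift2 u) 2 = 1"
    by (simp_all add: pval_def shift2_def)
  have P1: "0 \<notin> Peak u" by (simp add: Peak_def)
  show ?thesis
  proof (rule set_eqI)
    fix i
    show "i \<in> Peak (shift2 u) \<longleftrightarrow> i \<in> insert 1 ((\<lambda>k. k + 2) ` Peak u)"
    proof -
      consider "i = 0" | "i = 1" | "i = 2" | k where "i = k + 3"
      proof -
        have "i = 0 \<or> i = 1 \<or> i = 2 \<or> i = (i - 3) + 3" by arith
        then show ?thesis using that by blast
      qed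
      then show ?thesis
      proof cases
        case 1 then show ?thesis unfolding Peak_def by auto
      next
        case 2
        have "1 \<in> Peak (shift2 u)" unfolding Peak_def using lv v0 v1 v2 by (simp add: numeral_2_eq_2)
        then show ?thesis using 2 by simp
      next
        case 3
        have "2 \<notin> Peak (shift2 u)" unfolding Peak_def using v1 v2 by (simp add: numeral_2_eq_2)
        moreover have "2 \<notin> insert 1 ((\<lambda>k. k + 2) ` Peak u)" using P1 by auto
        ultimately show ?thesis using 3 by simp
      next
        case (4 k)
        have "i \<in> insert 1 ((\<lambda>k. k + 2) ` Peak u) \<longleftrightarrow> k + 1 \<in> Peak u"
        proof
          assume "i \<in> insert 1 ((\<lambda>k. k + 2) ` Peak u)"
          then obtain p where p: "p \<in> Peak u" "k + 3 = p + 2" using 4 by auto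
          then have "p = k + 1" by arith
          then show "k + 1 \<in> Peak u" using p by simp
        next
          assume "k + 1 \<in> Peak u"
          then show "i \<in> insert 1 ((\<lambda>k. k + 2) ` Peak u)" using 4 by (simp add: image_iff)
        qed
        moreover have "i \<in> Peak (shift2 u) \<longleftrightarrow> k + 1 \<in> Peak u"
        proof (cases "k + 1 \<le> m - 1")
          case True
          then have km: "k + 1 < m" using 4 lv by auto
          have a: "pval (shift2 u) i = u ! k + 2" using 4 len km by (simp add: pval_shift2)
          have b: "pval (shift2 u) (i+1) = u ! (k+1) + 2" using 4 len km True by (simp add: pval_shift2)
          have c: "pval (shift2 u) (i-1) = (if k = 0 then 1 else u ! (k - 1) + 2)" using 4 len km by (simp add: pval_shift2)
          have a': "pval u (k+1) = u ! k" by (simp add: pval_def)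
          have b': "pval u (k+1+1) = u ! (k+1)" by (simp add: pval_def)
          have c': "pval u (k+1-1) = (if k = 0 then 0 else u ! (k - 1))" by (simp add: pval_def)
          have u0: "u ! 0 \<ge> 1" using pos km by auto
          have "i \<in> Peak (shift2 u) \<longleftrightarrow> pval (shift2 u) (i-1) < pval (shift2 u) i \<and> pval (shift2 u) i > pval (shift2 u) (i+1)"
            unfolding Peak_def using 4 lv km by auto
          also have "\<dots> \<longleftrightarrow> pval u (k+1-1) < pval u (k+1) \<and> pval u (k+1) > pval u (k+1+1)"
            unfolding a b c a' b' c' using u0 by auto
          also have "\<dots> \<longleftrightarrow> k + 1 \<in> Peak u"
            unfolding Peak_def using len km by auto
          finally show ?thesis .
        next
          case False
          then show ?thesis using 4 lv len unfolding Peak_def by auto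
        qed
        ultimately show ?thesis by simp
      qed
    qed
  qed
qed

lemma shift2_perms: assumes "u \<in> perms m" shows "shift2 u \<in> perms (m + 2)"
proof -
  have "set (map (\<lambda>x. x + 2) u) = (\<lambda>x. x + 2) ` {1..m}" using assms by (simp add: perms_def)
  also have "\<dots> = {1+2..m+2}" by (rule image_add_atLeastAtMost')
  also have "\<dots> = {3..m+2}" by simp
  finally have s: "set (map (\<lambda>x. x + 2) u) = {3..m+2}" .
  have d: "distinct (map (\<lambda>x. x + 2) u)" using assms by (simp add: perms_def distinct_map inj_on_def)
  have "{1..m+2} = insert 2 (insert 1 {3..m+2})" by auto
  then show ?thesis unfolding perms_def shift2_def using s d by auto
qed

lemma id_perm: "[1..<m+1] \<in> perms m" "Peak [1..<m+1] = {}"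
proof -
  show "[1..<m+1] \<in> perms m" by (auto simp: perms_def)
  have pv: "pval [1..<m+1] i = i" if "i \<le> m" for i
    using that by (simp add: pval_def nth_upt del: upt_Suc)
  show "Peak [1..<m+1] = {}"
  proof (rule equals0I)
    fix i assume "i \<in> Peak [1..<m+1]"
    then have "i + 1 \<le> m" "pval [1..<m+1] i > pval [1..<m+1] (i+1)" unfolding Peak_def by (auto simp del: upt_Suc)
    then show False using pv[of i] pv[of "i+1"] by simp
  qed
qed

lemma exists_perm: "j \<le> m div 2 \<Longrightarrow> \<exists>u\<in>perms m. card (Peak u) = j"
proof (induction j arbitrary: m)
  case 0 then show ?case using id_perm by (metis card.empty)
next
  case (Suc j)
  have "j \<le> (m - 2) div 2" using Suc.prems by auto
  then obtain u where u: "u \<in> perms (m-2)" "card (Peak u) = j" using Suc.IH by blast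
  have m: "m - 2 + 2 = m" using Suc.prems by auto
  have "finite (Peak u)" using Peak_Fam Fam_card u by blast
  moreover have "1 \<notin> (\<lambda>k. k + 2) ` Peak u" by auto
  moreover have "card ((\<lambda>k. k + 2) ` Peak u) = card (Peak u)" by (rule card_image) (simp add: inj_on_def)
  ultimately have "card (Peak (shift2 u)) = Suc j" using Peak_shift2[OF u(1)] u(2) by simp
  then show ?case using shift2_perms[OF u(1)] m by metis
qed

lemma shift_back:
  assumes "\<forall>x\<in>S. x \<ge> (3::nat)"
  shows "(\<lambda>f. f - 2) ` S = P \<longleftrightarrow> S = (\<lambda>f. f + 2) ` P"
proof
  assume h: "(\<lambda>f. f - 2) ` S = P"
  have "S = (\<lambda>f. f + 2) ` ((\<lambda>f. f - 2) ` S)"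
  proof -
    have "(\<lambda>f. f + 2) ` ((\<lambda>f. f - 2) ` S) = (\<lambda>f. f - 2 + 2) ` S" by (simp add: image_image)
    also have "\<dots> = id ` S" using assms by (intro image_cong) auto
    finally show ?thesis by simp
  qed
  then show "S = (\<lambda>f. f + 2) ` P" using h by simp
next
  assume "S = (\<lambda>f. f + 2) ` P"
  then show "(\<lambda>f. f - 2) ` S = P" by (simp add: image_image)
qed

lemma Peak_pos: "0 \<notin> Peak u" by (simp add: Peak_def)

lemma pi_img_apply0: "u \<notin> perms (n - 2) \<Longrightarrow> pi_img n F u = 0"
  by (simp add: pi_img_def PF_def)

lemma pi_img_apply:
  assumes F: "F \<in> Fam n" and u: "u \<in> perms (n - 2)"
  shows "pi_img n F u = (if F = (\<lambda>f. f + 2) ` Peak u then 1 else 0)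
                       - (if F = insert 1 ((\<lambda>f. f + 2) ` Peak u) then 1 else 0)"
proof -
  define A where "A = (\<lambda>f. f + 2) ` Peak u"
  have F1: "\<forall>x\<in>F. x \<ge> 1" using F unfolding Fam_def by auto
  have A1: "1 \<notin> A" "2 \<notin> A" using Peak_pos[of u] unfolding A_def by auto
  show ?thesis
  proof (cases "2 \<in> F")
    case True
    have "F \<noteq> A" "F \<noteq> insert 1 A" using True A1 by auto
    then show ?thesis using True unfolding A_def by (simp add: pi_img_def)
  next
    case n2: False
    show ?thesis
    proof (cases "1 \<in> F")
      case True
      have ge: "\<forall>x\<in>F - {1}. x \<ge> 3" using F1 n2 by (auto simp: numeral_3_eq_3 numeral_2_eq_2) (metis Suc_le_eq le_neq_implies_less One_nat_def less_2_cases numeral_2_eq_2 not_less_eq_eq)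
      have e0: "F = insert 1 A \<longleftrightarrow> F - {1} = A" using True A1 by auto
      have e1: "pi_img n F u = - (if Peak u = (\<lambda>f. f - 2) ` (F - {1}) then 1 else 0)"
        using True n2 u by (simp add: pi_img_def PF_def)
      have e2: "(Peak u = (\<lambda>f. f - 2) ` (F - {1})) \<longleftrightarrow> F = insert 1 A"
        using shift_back[OF ge, of "Peak u"] e0 unfolding A_def by auto
      have "F \<noteq> A" using True A1 by auto
      then show ?thesis using e1 e2 unfolding A_def by simp
    next
      case False
      have ge: "\<forall>x\<in>F. x \<ge> 3" using F1 n2 False by (auto simp: numeral_3_eq_3 numeral_2_eq_2) (metis Suc_le_eq le_neq_implies_less One_nat_def less_2_cases numeral_2_eq_2 not_less_eq_eq)
      have e1: "pi_img n F u = (if Peak u = (\<lambda>f. f - 2) ` F then 1 else 0)"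
        using False n2 u by (simp add: pi_img_def PF_def)
      have e2: "(Peak u = (\<lambda>f. f - 2) ` F) \<longleftrightarrow> F = A"
        using shift_back[OF ge, of "Peak u"] unfolding A_def by auto
      have "F \<noteq> insert 1 A" using False by auto
      then show ?thesis using e1 e2 unfolding A_def by simp
    qed
  qed
qed

lemma master:
  assumes n: "n \<ge> 2" and pi: "is_pi n \<pi>"
  shows "\<pi> (E n c) = E (n - 2) (\<lambda>k. c k - c (k + 1))"
proof -
  have "E n c = (\<Sum>F\<in>Fam n. smul (c (card F)) (PF n F))"
    using PF_sum[of "\<lambda>F. c (card F)" n] by (simp add: E_def)
  hence "\<pi> (E n c) = (\<Sum>F\<in>Fam n. smul (c (card F)) (pi_img n F))"
    using pi unfolding is_pi_def by simp
  also have "\<dots> = E (n - 2) (\<lambda>k. c k - c (k + 1))"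
  proof
    fix u
    show "(\<Sum>F\<in>Fam n. smul (c (card F)) (pi_img n F)) u = E (n - 2) (\<lambda>k. c k - c (k + 1)) u"
    proof (cases "u \<in> perms (n - 2)")
      case False then show ?thesis by (simp add: sum_fun_apply smul_def pi_img_apply0 E_def)
    next
      case True
      define A where "A = (\<lambda>f. f + 2) ` Peak u"
      have PF: "Peak u \<in> Fam (n - 2)" using Peak_Fam True by blast
      have finP: "finite (Peak u)" using Fam_card PF by blast
      have pb: "\<forall>p\<in>Peak u. 1 \<le> p \<and> p \<le> n - 3" using PF unfolding Fam_def by auto
      have AF: "A \<in> Fam n" using PF n pb unfolding A_def Fam_def by (auto; fastforce)
      have A1: "1 \<notin> A" "2 \<notin> A" using Peak_pos[of u] unfolding A_def by auto
      have BF: "insert 1 A \<in> Fam n" using AF n A1 unfolding Fam_def by (auto simp: numeral_2_eq_2)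
      have cA: "card A = card (Peak u)" unfolding A_def by (rule card_image) (simp add: inj_on_def)
      have finA: "finite A" unfolding A_def using finP by simp
      have cB: "card (insert 1 A) = card (Peak u) + 1" using cA finA A1 by simp
      have pa: "pi_img n F u = (if F = A then 1 else 0) - (if F = insert 1 A then 1 else 0)" if "F \<in> Fam n" for F
        using pi_img_apply[OF that True] unfolding A_def by simp
      have AB: "A \<noteq> insert 1 A" using A1 by auto
      have "(\<Sum>F\<in>Fam n. smul (c (card F)) (pi_img n F)) u
          = (\<Sum>F\<in>Fam n. (if F = A then c (card F) else 0) - (if F = insert 1 A then c (card F) else 0))"
        unfolding sum_fun_apply smul_def
        by (intro sum.cong refl) (simp add: pa right_diff_distrib)
      also have "\<dots> = c (card A) - c (card (insert 1 A))"
        using AF BF Fam_finite by (simp add: sum_subtractf sum.delta)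
      finally show ?thesis using True cA cB by (simp add: E_def)
    qed
  qed
  finally show ?thesis .
qed

lemma E_cong: "(\<And>k. k \<le> m div 2 \<Longrightarrow> c k = d k) \<Longrightarrow> E m c = E m d"
  unfolding E_def using Peak_card by (intro ext) auto

lemma E_diff: "E m c - E m d = E m (\<lambda>k. c k - d k)"
  unfolding E_def by (intro ext) auto

lemma E_uminus: "- E m c = E m (\<lambda>k. - c k)"
  unfolding E_def by (intro ext) auto

lemma E_smul: "smul a (E m c) = E m (\<lambda>k. a * c k)"
  unfolding E_def smul_def by (intro ext) auto

lemma E_zero: "E m (\<lambda>k. 0) = 0"
  unfolding E_def by (intro ext) auto

lemma smul_one: "smul 1 x = x" by (simp add: smul_def)

theorem proposition6p11:
  fixes n :: nat and \<pi> :: "elem \<Rightarrow> elem"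
  assumes "n \<ge> 2" and "is_pi n \<pi>"
  shows "(\<forall>j \<le> n div 2. \<pi> (pj n j) =
            (if j = 0 then pj (n - 2) 0
             else if j < n div 2 then pj (n - 2) j - pj (n - 2) (j - 1)
             else - pj (n - 2) (n div 2 - 1)))
       \<and> \<pi> ` wp n = wp (n - 2)
       \<and> {x \<in> wp n. \<pi> x = 0} = {smul c (\<Sum>j\<le>n div 2. pj n j) | c. True}
       \<and> (\<Sum>j\<le>n div 2. pj n j) = allperms n
       \<and> allperms n \<noteq> 0"
proof -
  note M = master[OF assms]
  define K where "K = n div 2"
  have K2: "(n - 2) div 2 = K - 1" "K \<ge> 1" using assms(1) unfolding K_def by auto
  have S: "(\<Sum>j\<le>n div 2. pj n j) = E n (\<lambda>k. 1)"
    using pj_sum[of n "n div 2" "\<lambda>k. 1"] by (simp add: smul_one)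
  have P1: "\<forall>j \<le> n div 2. \<pi> (pj n j) =
            (if j = 0 then pj (n - 2) 0
             else if j < n div 2 then pj (n - 2) j - pj (n - 2) (j - 1)
             else - pj (n - 2) (n div 2 - 1))"
  proof (intro allI impI)
    fix j assume j: "j \<le> n div 2"
    have e: "\<pi> (pj n j) = E (n - 2) (\<lambda>k. (if k = j then 1 else 0) - (if k + 1 = j then 1 else 0))"
      unfolding pj_E M by simp
    show "\<pi> (pj n j) = (if j = 0 then pj (n - 2) 0
             else if j < n div 2 then pj (n - 2) j - pj (n - 2) (j - 1)
             else - pj (n - 2) (n div 2 - 1))"
    proof -
      consider "j = 0" | "0 < j" "j < n div 2" | "0 < j" "j = n div 2" using j K2 unfolding K_def by linarith
      then show ?thesis
      proof cases
        case 1
        have "pj (n - 2) 0 = E (n - 2) (\<lambda>k. (if k = j then 1 else 0) - (if k + 1 = j then 1 else 0))" unfolding pj_E using 1 by (intro E_cong) auto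
        then show ?thesis using 1 e by simp
      next
        case 2
        have "pj (n - 2) j - pj (n - 2) (j - 1) = E (n - 2) (\<lambda>k. (if k = j then 1 else 0) - (if k + 1 = j then 1 else 0))" unfolding pj_E E_diff using 2 by (intro E_cong) auto
        then show ?thesis using 2 e by simp
      next
        case 3
        have "- pj (n - 2) (n div 2 - 1) = E (n - 2) (\<lambda>k. (if k = j then 1 else 0) - (if k + 1 = j then 1 else 0))" unfolding pj_E E_uminus using 3 K2 unfolding K_def by (intro E_cong) auto
        then show ?thesis using 3 e by simp
      qed
    qed
  qed
  have P2: "\<pi> ` wp n = wp (n - 2)"
  proof
    show "\<pi> ` wp n \<subseteq> wp (n - 2)" unfolding wp_E using M by auto
  next
    show "wp (n - 2) \<subseteq> \<pi> ` wp n"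
    proof
      fix y assume "y \<in> wp (n - 2)"
      then obtain d where y: "y = E (n - 2) d" unfolding wp_E by auto
      define c where "c i = (\<Sum>k\<in>{i..<n}. d k)" for i
      have "\<pi> (E n c) = y" unfolding M y
      proof (intro E_cong)
        fix k assume "k \<le> (n - 2) div 2"
        then have "k < n" using assms(1) by linarith
        have "c k = d k + c (k + 1)" unfolding c_def by (simp only: sum.atLeast_Suc_lessThan[OF \<open>k < n\<close>] Suc_eq_plus1)
        then show "c k - c (k + 1) = d k" by simp
      qed
      then show "y \<in> \<pi> ` wp n" unfolding wp_E by auto
    qed
  qed
  have P3: "{x \<in> wp n. \<pi> x = 0} = {smul c (\<Sum>j\<le>n div 2. pj n j) | c. True}"
  proof
    show "{x \<in> wp n. \<pi> x = 0} \<subseteq> {smul c (\<Sum>j\<le>n div 2. pj n j) | c. True}"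
    proof
      fix x assume "x \<in> {x \<in> wp n. \<pi> x = 0}"
      then obtain c where x: "x = E n c" and z: "E (n - 2) (\<lambda>k. c k - c (k + 1)) = 0"
        unfolding wp_E using M by auto
      have step: "c k = c (k + 1)" if "k < K" for k
      proof -
        have "k \<le> (n - 2) div 2" using that K2 by auto
        then obtain u where u: "u \<in> perms (n - 2)" "card (Peak u) = k" using exists_perm by blast
        have "E (n - 2) (\<lambda>k. c k - c (k + 1)) u = 0" using z by simp
        then show ?thesis using u by (simp add: E_def)
      qed
      have all: "c k = c 0" if "k \<le> K" for k
        using that
      proof (induction k)
        case 0 then show ?case by simp
      next
        case (Suc k)
        have "c (Suc k) = c k" using step[of k] Suc.prems by simp
        also have "c k = c 0" using Suc by simp
        finally show ?case .
      qed
      have "x = E n (\<lambda>k. c 0 * 1)" unfolding x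
      proof (rule E_cong)
        fix k assume "k \<le> n div 2"
        then have "c k = c 0" using all[of k] unfolding K_def by blast
        then show "c k = c 0 * 1" by simp
      qed
      then have "x = smul (c 0) (\<Sum>j\<le>n div 2. pj n j)" unfolding S E_smul by simp
      then show "x \<in> {smul c (\<Sum>j\<le>n div 2. pj n j) | c. True}" by blast
    qed
  next
    show "{smul c (\<Sum>j\<le>n div 2. pj n j) | c. True} \<subseteq> {x \<in> wp n. \<pi> x = 0}"
    proof
      fix y assume "y \<in> {smul c (\<Sum>j\<le>n div 2. pj n j) | c. True}"
      then obtain a where "y = smul a (\<Sum>j\<le>n div 2. pj n j)" by blast
      then have y: "y = E n (\<lambda>k. a * 1)" unfolding S E_smul by simp
      have "y \<in> wp n" unfolding wp_E y by (rule rangeI)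
      moreover have "\<pi> y = 0" unfolding y M using E_zero by simp
      ultimately show "y \<in> {x \<in> wp n. \<pi> x = 0}" by blast
    qed
  qed
  have P5: "allperms n \<noteq> 0"
  proof
    assume "allperms n = 0"
    then have "allperms n [1..<n+1] = 0" by simp
    then show False using id_perm(1)[of n] by (simp add: allperms_def)
  qed
  show ?thesis using P1 P2 P3 P5 S allperms_E by simp
qed

end
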